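(* If $D$ is an API-domain and $P$ is a prime ideal of $D$, then $D/P$ is an API-domain; if moreover $D$ is quasilocal, then $D/P$ is a quasilocal API-domain.
   Context: An API-domain is an integral domain in which for every nonempty subset $\{d_\alpha\}$ of nonzero elements there is a natural number $n$ with the ideal generated by $\{d_\alpha^n\}$ principal. Quasilocal: unique maximal ideal. *)

theory Defs
  imports "HOL-Algebra.Algebra"
begin

definition API_domain :: "('a, 'b) ring_scheme \<Rightarrow> bool" where
  "API_domain R \<longleftrightarrow> domain R \<and>
     (\<forall>S. S \<noteq> {} \<and> S \<subseteq> carrier R - {\<zero>\<^bsub>R\<^esub>} \<longrightarrow>
        (\<exists>n::nat. n \<ge> 1 \<and>
           principalideal (Idl\<^bsub>R\<^esub> ((\<lambda>d. d [^]\<^bsub>R\<^esub> n) ` S)) R))"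

definition quasilocal :: "('a, 'b) ring_scheme \<Rightarrow> bool" where
  "quasilocal R \<longleftrightarrow> (\<exists>!M. maximalideal M R)"

end

theory Submission
  imports Defs
begin

lemma (in ring) chain_union_ideal:
  assumes ne: "C \<noteq> {}" and id: "\<And>J. J \<in> C \<Longrightarrow> ideal J R"
    and ch: "\<And>J K. J \<in> C \<Longrightarrow> K \<in> C \<Longrightarrow> J \<subseteq> K \<or> K \<subseteq> J"
  shows "ideal (\<Union>C) R"
proof (rule idealI)
  show "ring R" by (rule ring_axioms)
  show "subgroup (\<Union>C) (add_monoid R)"
  proof
    show "\<Union>C \<subseteq> carrier (add_monoid R)"
    proof
      fix x assume "x \<in> \<Union>C"
      then obtain J where J: "J \<in> C" "x \<in> J" by blast
      then have "ideal J R" using id by blast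
      then show "x \<in> carrier (add_monoid R)" using J(2) ideal.Icarr by fastforce
    qed
    fix x y assume "x \<in> \<Union>C" "y \<in> \<Union>C"
    then obtain J K where J: "J \<in> C" "x \<in> J" and K: "K \<in> C" "y \<in> K" by blast
    have "\<exists>L\<in>C. x \<in> L \<and> y \<in> L" using ch[OF J(1) K(1)] J K by blast
    then obtain L where L: "L \<in> C" "x \<in> L" "y \<in> L" by blast
    then have "ideal L R" using id by blast
    then have "x \<oplus> y \<in> L" using L by (simp add: additive_subgroup.a_closed ideal.axioms(1))
    then show "x \<otimes>\<^bsub>add_monoid R\<^esub> y \<in> \<Union>C" using L by auto
  next
    obtain J where J: "J \<in> C" using ne by blast
    then have "ideal J R" using id by blast
    then have "\<zero> \<in> J" by (simp add: additive_subgroup.zero_closed ideal.axioms(1))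
    then show "\<one>\<^bsub>add_monoid R\<^esub> \<in> \<Union>C" using J by auto
  next
    fix x assume "x \<in> \<Union>C"
    then obtain J where J: "J \<in> C" "x \<in> J" by blast
    then have "ideal J R" using id by blast
    then have "\<ominus> x \<in> J" using J by (simp add: additive_subgroup.a_inv_closed ideal.axioms(1))
    then show "inv\<^bsub>add_monoid R\<^esub> x \<in> \<Union>C" using J unfolding a_inv_def by auto
  qed
next
  fix a x assume ax: "a \<in> \<Union>C" "x \<in> carrier R"
  then obtain J where J: "J \<in> C" "a \<in> J" by blast
  then have "ideal J R" using id by blast
  then have "x \<otimes> a \<in> J" "a \<otimes> x \<in> J" using J ax by (simp_all add: ideal.I_l_closed ideal.I_r_closed)
  then show "x \<otimes> a \<in> \<Union>C" "a \<otimes> x \<in> \<Union>C" using J by auto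
qed

lemma (in ring) krull:
  assumes "ideal I R" "\<one> \<notin> I"
  shows "\<exists>M. maximalideal M R \<and> I \<subseteq> M"
proof -
  define A where "A = {J. ideal J R \<and> I \<subseteq> J \<and> \<one> \<notin> J}"
  have "\<exists>M\<in>A. \<forall>Y\<in>A. M \<subseteq> Y \<longrightarrow> Y = M"
  proof (rule subset_Zorn_nonempty)
    show "A \<noteq> {}" using assms unfolding A_def by blast
    fix C assume C: "C \<noteq> {}" "subset.chain A C"
    have "ideal (\<Union>C) R"
      by (rule chain_union_ideal) (use C in \<open>auto simp: subset.chain_def A_def\<close>)
    moreover have "I \<subseteq> \<Union>C" using C unfolding subset.chain_def A_def by blast
    moreover have "\<one> \<notin> \<Union>C" using C by (auto simp: subset.chain_def A_def)
    ultimately show "\<Union>C \<in> A" unfolding A_def by blast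
  qed
  then obtain M where M: "M \<in> A" "\<And>Y. Y \<in> A \<Longrightarrow> M \<subseteq> Y \<Longrightarrow> Y = M" by blast
  have "maximalideal M R"
  proof (rule maximalidealI)
    show "ideal M R" using M unfolding A_def by blast
    show "carrier R \<noteq> M" using M unfolding A_def by auto
    fix J assume J: "ideal J R" "M \<subseteq> J" "J \<subseteq> carrier R"
    show "J = M \<or> J = carrier R"
    proof (cases "\<one> \<in> J")
      case True then show ?thesis using ideal.one_imp_carrier[OF J(1)] by blast
    next
      case False then show ?thesis using M J unfolding A_def by blast
    qed
  qed
  then show ?thesis using M unfolding A_def by blast
qed

lemma quot_carrier:
  assumes "ring R"
  shows "carrier (R Quot I) = (+>\<^bsub>R\<^esub>) I ` carrier R"
  unfolding FactRing_def A_RCOSETS_def'[of R I] by auto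

lemma quot_Idl_image:
  assumes "ring R" "ideal I R" "A \<subseteq> carrier R"
  shows "Idl\<^bsub>R Quot I\<^esub> ((+>\<^bsub>R\<^esub>) I ` A) = (+>\<^bsub>R\<^esub>) I ` (Idl\<^bsub>R\<^esub> A)"
proof -
  interpret R: ring R by fact
  interpret H: ring_hom_ring R "R Quot I" "(+>\<^bsub>R\<^esub>) I"
    using ideal.rcos_ring_hom_ring[OF assms(2)] .
  let ?h = "(+>\<^bsub>R\<^esub>) I"
  have IA: "ideal (Idl\<^bsub>R\<^esub> A) R" using R.genideal_ideal[OF assms(3)] .
  have img: "ideal (?h ` (Idl\<^bsub>R\<^esub> A)) (R Quot I)"
    using R.ring_ideal_imp_quot_ideal[OF assms(2) IA] .
  have hA: "?h ` A \<subseteq> carrier (R Quot I)"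
    using assms(3) quot_carrier[OF assms(1), of I] by auto
  show ?thesis
  proof
    show "Idl\<^bsub>R Quot I\<^esub> (?h ` A) \<subseteq> ?h ` (Idl\<^bsub>R\<^esub> A)"
      by (rule H.S.genideal_minimal[OF img]) (use R.genideal_self[OF assms(3)] in blast)
    have V: "ideal {r \<in> carrier R. ?h r \<in> Idl\<^bsub>R Quot I\<^esub> (?h ` A)} R"
      by (rule H.ideal_vimage[OF H.S.genideal_ideal[OF hA]])
    have "A \<subseteq> {r \<in> carrier R. ?h r \<in> Idl\<^bsub>R Quot I\<^esub> (?h ` A)}"
      using H.S.genideal_self[OF hA] assms(3) by auto
    then have "Idl\<^bsub>R\<^esub> A \<subseteq> {r \<in> carrier R. ?h r \<in> Idl\<^bsub>R Quot I\<^esub> (?h ` A)}"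
      by (rule R.genideal_minimal[OF V])
    then show "?h ` (Idl\<^bsub>R\<^esub> A) \<subseteq> Idl\<^bsub>R Quot I\<^esub> (?h ` A)" by blast
  qed
qed

lemma quot_img_Union:
  assumes "ring R" "ideal I R" "ideal J (R Quot I)"
  shows "(+>\<^bsub>R\<^esub>) I ` (\<Union> J) = J"
proof -
  interpret R: ring R by fact
  have sub: "J \<subseteq> carrier (R Quot I)"
    using assms(3) additive_subgroup.a_subset ideal_def by blast
  show ?thesis
  proof
    show "(+>\<^bsub>R\<^esub>) I ` (\<Union> J) \<subseteq> J"
      using R.canonical_proj_vimage_in_carrier[OF assms(2) sub] R.canonical_proj_vimage_mem_iff[OF assms(2) sub]
      by blast
    show "J \<subseteq> (+>\<^bsub>R\<^esub>) I ` (\<Union> J)"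
    proof
      fix x assume "x \<in> J"
      then obtain r where r: "r \<in> carrier R" "x = I +>\<^bsub>R\<^esub> r"
        using sub quot_carrier[OF assms(1), of I] by auto
      hence "r \<in> \<Union> J"
        using \<open>x \<in> J\<close> R.canonical_proj_vimage_mem_iff[OF assms(2) sub] by blast
      thus "x \<in> (+>\<^bsub>R\<^esub>) I ` (\<Union> J)" using r(2) by blast
    qed
  qed
qed

lemma quot_Union_img:
  assumes "ring R" "ideal I R" "ideal K R" "I \<subseteq> K"
  shows "\<Union> ((+>\<^bsub>R\<^esub>) I ` K) = K"
  using ring.ideal_incl_iff[OF assms(1,2,3)] assms(4) by simp

lemma quot_max_vimage:
  assumes "ring R" "ideal I R" "maximalideal M (R Quot I)"
  shows "maximalideal (\<Union> M) R"
proof -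
  interpret R: ring R by fact
  let ?h = "(+>\<^bsub>R\<^esub>) I"
  have MI: "ideal M (R Quot I)" using assms(3) maximalideal.axioms(1) by blast
  have K0: "ideal (\<Union> M) R" using R.quot_ideal_imp_ring_ideal[OF assms(2) MI] .
  have "I \<in> M"
    using additive_subgroup.zero_closed[OF ideal.axioms(1)[OF MI]] unfolding FactRing_def by simp
  then have IK: "I \<subseteq> \<Union> M" by blast
  have hM: "?h ` (\<Union> M) = M" using quot_img_Union[OF assms(1,2) MI] .
  have carrQ: "carrier (R Quot I) = ?h ` carrier R" using quot_carrier[OF assms(1)] .
  show ?thesis
  proof (rule maximalidealI)
    show "ideal (\<Union> M) R" by fact
    show "carrier R \<noteq> \<Union> M"
    proof
      assume "carrier R = \<Union> M"
      then have "?h ` carrier R = M" using hM by simp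
      then have "M = carrier (R Quot I)" using carrQ by simp
      then show False using maximalideal.I_notcarr[OF assms(3)] by simp
    qed
    fix J assume J: "ideal J R" "\<Union> M \<subseteq> J" "J \<subseteq> carrier R"
    have IJ: "I \<subseteq> J" using IK J(2) by (rule order_trans)
    have hJ: "ideal (?h ` J) (R Quot I)" using R.ring_ideal_imp_quot_ideal[OF assms(2) J(1)] .
    have "?h ` (\<Union> M) \<subseteq> ?h ` J" using J(2) by (rule image_mono)
    then have "M \<subseteq> ?h ` J" unfolding hM .
    moreover have "?h ` J \<subseteq> ?h ` carrier R" using J(3) by (rule image_mono)
    then have "?h ` J \<subseteq> carrier (R Quot I)" unfolding carrQ .
    ultimately have "?h ` J = M \<or> ?h ` J = carrier (R Quot I)"
      using maximalideal.I_maximal[OF assms(3) hJ] by blast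
    then show "J = \<Union> M \<or> J = carrier R"
    proof
      assume "?h ` J = M"
      then have "\<Union> (?h ` J) = \<Union> M" by simp
      then show ?thesis using quot_Union_img[OF assms(1,2) J(1) IJ] by simp
    next
      assume "?h ` J = carrier (R Quot I)"
      then have "\<Union> (?h ` J) = \<Union> (?h ` carrier R)" using carrQ by simp
      moreover have "I \<subseteq> carrier R" using additive_subgroup.a_subset[OF ideal.axioms(1)[OF assms(2)]] .
      ultimately show ?thesis
        using quot_Union_img[OF assms(1,2) J(1) IJ] quot_Union_img[OF assms(1,2) R.oneideal] by simp
    qed
  qed
qed

theorem theorem4:
  fixes D :: "('a, 'b) ring_scheme" and P :: "'a set"
  assumes "API_domain D" and "primeideal P D"
  shows "API_domain (D Quot P) \<and> (quasilocal D \<longrightarrow> quasilocal (D Quot P))"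
proof -
  have dom: "domain D" using assms(1) unfolding API_domain_def by blast
  interpret D: domain D by (rule dom)
  have PI: "ideal P D" using assms(2) primeideal.axioms(1) by blast
  have domQ: "domain (D Quot P)" using primeideal.quotient_is_domain[OF assms(2)] .
  interpret Q: domain "D Quot P" by (rule domQ)
  interpret H: ring_hom_ring D "D Quot P" "(+>\<^bsub>D\<^esub>) P"
    using ideal.rcos_ring_hom_ring[OF PI] .
  let ?h = "(+>\<^bsub>D\<^esub>) P"
  have carrQ: "carrier (D Quot P) = ?h ` carrier D" using quot_carrier[OF D.ring_axioms] .
  have API: "API_domain (D Quot P)"
    unfolding API_domain_def
  proof (intro conjI allI impI)
    show "domain (D Quot P)" by (rule domQ)
    fix S assume S: "S \<noteq> {} \<and> S \<subseteq> carrier (D Quot P) - {\<zero>\<^bsub>D Quot P\<^esub>}"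
    have "S \<subseteq> carrier (D Quot P)" using S by blast
    then have SQ: "S \<subseteq> ?h ` carrier D" unfolding carrQ .
    define r where "r = (\<lambda>Y. SOME a. a \<in> carrier D \<and> ?h a = Y)"
    have r: "r Y \<in> carrier D \<and> ?h (r Y) = Y" if Y: "Y \<in> S" for Y
    proof -
      have "Y \<in> ?h ` carrier D" using SQ Y by (rule subsetD)
      then obtain a where a: "a \<in> carrier D" "Y = ?h a" by (rule imageE)
      then have ex: "\<exists>a. a \<in> carrier D \<and> ?h a = Y" by auto
      show ?thesis unfolding r_def by (rule someI_ex[OF ex])
    qed
    define T where "T = r ` S"
    have Tsub: "T \<subseteq> carrier D - {\<zero>\<^bsub>D\<^esub>}"
    proof
      fix t assume "t \<in> T"
      then obtain Y where Y: "Y \<in> S" "t = r Y" unfolding T_def by blast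
      have "t \<noteq> \<zero>\<^bsub>D\<^esub>"
      proof
        assume "t = \<zero>\<^bsub>D\<^esub>"
        then have "Y = \<zero>\<^bsub>D Quot P\<^esub>" using r[OF Y(1)] Y(2) H.hom_zero by simp
        then show False using S Y(1) by blast
      qed
      then show "t \<in> carrier D - {\<zero>\<^bsub>D\<^esub>}" using r[OF Y(1)] Y(2) by blast
    qed
    have "T \<noteq> {}" using S unfolding T_def by blast
    then obtain n :: nat where n: "n \<ge> 1" and pr: "principalideal (Idl\<^bsub>D\<^esub> ((\<lambda>d. d [^]\<^bsub>D\<^esub> n) ` T)) D"
      using assms(1) Tsub unfolding API_domain_def by blast
    obtain g where g: "g \<in> carrier D" "Idl\<^bsub>D\<^esub> ((\<lambda>d. d [^]\<^bsub>D\<^esub> n) ` T) = Idl\<^bsub>D\<^esub> {g}"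
      using principalideal.generate[OF pr] by blast
    have Acarr: "(\<lambda>d. d [^]\<^bsub>D\<^esub> n) ` T \<subseteq> carrier D" using Tsub by auto
    have img: "?h ` ((\<lambda>d. d [^]\<^bsub>D\<^esub> n) ` T) = (\<lambda>Y. Y [^]\<^bsub>D Quot P\<^esub> n) ` S"
      unfolding T_def image_image
    proof (rule image_cong[OF refl])
      fix Y assume "Y \<in> S"
      then show "?h (r Y [^]\<^bsub>D\<^esub> n) = Y [^]\<^bsub>D Quot P\<^esub> n"
        using r H.hom_nat_pow by simp
    qed
    have "Idl\<^bsub>D Quot P\<^esub> ((\<lambda>Y. Y [^]\<^bsub>D Quot P\<^esub> n) ` S) = ?h ` (Idl\<^bsub>D\<^esub> {g})"
      using quot_Idl_image[OF D.ring_axioms PI Acarr] img g(2) by simp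
    also have "\<dots> = Idl\<^bsub>D Quot P\<^esub> (?h ` {g})"
      using quot_Idl_image[OF D.ring_axioms PI, of "{g}"] g(1) by simp
    finally have eq: "Idl\<^bsub>D Quot P\<^esub> ((\<lambda>Y. Y [^]\<^bsub>D Quot P\<^esub> n) ` S) = Idl\<^bsub>D Quot P\<^esub> {?h g}" by simp
    have Scarr: "(\<lambda>Y. Y [^]\<^bsub>D Quot P\<^esub> n) ` S \<subseteq> carrier (D Quot P)" using S by auto
    have "principalideal (Idl\<^bsub>D Quot P\<^esub> ((\<lambda>Y. Y [^]\<^bsub>D Quot P\<^esub> n) ` S)) (D Quot P)"
      by (rule principalidealI[OF Q.genideal_ideal[OF Scarr]]) (use eq g(1) in auto)
    then show "\<exists>n::nat. n \<ge> 1 \<and> principalideal (Idl\<^bsub>D Quot P\<^esub> ((\<lambda>d. d [^]\<^bsub>D Quot P\<^esub> n) ` S)) (D Quot P)"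
      using n by blast
  qed
  have QL: "quasilocal (D Quot P)" if ql: "quasilocal D"
  proof -
    have "\<one>\<^bsub>D Quot P\<^esub> \<notin> {\<zero>\<^bsub>D Quot P\<^esub>}" by simp
    then obtain M where M: "maximalideal M (D Quot P)"
      using Q.krull[OF Q.zeroideal] by blast
    have "M' = M" if M': "maximalideal M' (D Quot P)" for M'
    proof -
      have "maximalideal (\<Union> M) D" "maximalideal (\<Union> M') D"
        using quot_max_vimage[OF D.ring_axioms PI] M M' by blast+
      then have "\<Union> M' = \<Union> M" using ql unfolding quasilocal_def by blast
      then show ?thesis
        using quot_img_Union[OF D.ring_axioms PI] maximalideal.axioms(1) M M' by metis
    qed
    then show ?thesis unfolding quasilocal_def using M by blast
  qed
  show ?thesis using API QL by blast
qed

end
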